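(* Let $\varphi$ be any first-order formula in negation-normal form. Then $\varphi^N \rightarrow \varphi^{\mathit{awk}}$ is provable in minimal logic. Consequently, for formulas $\varphi$ in negation-normal form in the language of arithmetic, Peano arithmetic $\mathsf{PA}$ proves $\varphi$ if and only if $\mathsf{HA'}$ proves $\varphi^{\mathit{awk}}$.
   Context: Logical symbols are $\forall,\exists,\land,\lor,\rightarrow,\bot$, with $\lnot\varphi$ defined as $\varphi\rightarrow\bot$. Minimal logic is intuitionistic logic without ex falso (from $\bot$ infer anything). A formula is in negation-normal form if it is built from atomic and negated atomic formulas using $\land,\lor,\forall,\exists$. For such $\varphi$, the classical negation $\sim\varphi$ is obtained from $\varphi$ by exchanging $\land$ with $\lor$, $\forall$ with $\exists$, and each atomic formula with its negation (so $\sim\sim\varphi$ is $\varphi$). The awkward translation is $\varphi^{\mathit{awk}} := \lnot(\sim\varphi)$. The Gödel–Gentzen translation $\varphi^N$ is defined by: $\bot^N=\bot$; $\theta^N=\lnot\lnot\theta$ for atomic $\theta$; $(\varphi\land\psi)^N=\varphi^N\land\psi^N$; $(\varphi\lor\psi)^N=\lnot(\lnot\varphi^N\land\lnot\psi^N)$; $(\varphi\rightarrow\psi)^N=\varphi^N\rightarrow\psi^N$; $(\forall x\varphi)^N=\forall x\varphi^N$; $(\exists x\varphi)^N=\lnot\forall x\lnot\varphi^N$. $\mathsf{PA}$ is classical first-order arithmetic; $\mathsf{HA'}$ denotes Heyting arithmetic formulated over minimal logic (the language containing symbols for the primitive recursive functions, so that every negated atomic formula has an atomic equivalent). *)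

theory Defs
  imports Main
begin

section \<open>First-order syntax (de Bruijn indices)\<close>

datatype 'f trm = Var nat | Fn 'f "'f trm list"

datatype ('f, 'p) fm =
    Bot
  | Atom 'p "'f trm list"
  | And "('f, 'p) fm" "('f, 'p) fm"
  | Or "('f, 'p) fm" "('f, 'p) fm"
  | Imp "('f, 'p) fm" "('f, 'p) fm"
  | All "('f, 'p) fm"
  | Ex "('f, 'p) fm"

abbreviation Neg :: "('f, 'p) fm \<Rightarrow> ('f, 'p) fm" where
  "Neg \<phi> \<equiv> Imp \<phi> Bot"

primrec liftt :: "nat \<Rightarrow> 'f trm \<Rightarrow> 'f trm" where
  "liftt k (Var i) = (if i < k then Var i else Var (Suc i))"
| "liftt k (Fn f ts) = Fn f (map (liftt k) ts)"

primrec substt :: "nat \<Rightarrow> 'f trm \<Rightarrow> 'f trm \<Rightarrow> 'f trm" where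
  "substt k s (Var i) = (if i < k then Var i else if i = k then s else Var (i - 1))"
| "substt k s (Fn f ts) = Fn f (map (substt k s) ts)"

primrec liftf :: "nat \<Rightarrow> ('f, 'p) fm \<Rightarrow> ('f, 'p) fm" where
  "liftf k Bot = Bot"
| "liftf k (Atom p ts) = Atom p (map (liftt k) ts)"
| "liftf k (And \<phi> \<psi>) = And (liftf k \<phi>) (liftf k \<psi>)"
| "liftf k (Or \<phi> \<psi>) = Or (liftf k \<phi>) (liftf k \<psi>)"
| "liftf k (Imp \<phi> \<psi>) = Imp (liftf k \<phi>) (liftf k \<psi>)"
| "liftf k (All \<phi>) = All (liftf (Suc k) \<phi>)"
| "liftf k (Ex \<phi>) = Ex (liftf (Suc k) \<phi>)"

primrec substf :: "nat \<Rightarrow> 'f trm \<Rightarrow> ('f, 'p) fm \<Rightarrow> ('f, 'p) fm" where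
  "substf k s Bot = Bot"
| "substf k s (Atom p ts) = Atom p (map (substt k s) ts)"
| "substf k s (And \<phi> \<psi>) = And (substf k s \<phi>) (substf k s \<psi>)"
| "substf k s (Or \<phi> \<psi>) = Or (substf k s \<phi>) (substf k s \<psi>)"
| "substf k s (Imp \<phi> \<psi>) = Imp (substf k s \<phi>) (substf k s \<psi>)"
| "substf k s (All \<phi>) = All (substf (Suc k) (liftt 0 s) \<phi>)"
| "substf k s (Ex \<phi>) = Ex (substf (Suc k) (liftt 0 s) \<phi>)"

text \<open>deriv cl Ax Gamma phi: phi is derivable from the hypotheses Gamma, using
  the non-logical axioms Ax (axiom schemas, closed under substitution, so their free
  variables behave as universally quantified). If cl is False the logic is minimal
  logic (no ex falso); if cl is True the double-negation rule is added, giving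
  classical logic.\<close>
inductive deriv :: "bool \<Rightarrow> ('f, 'p) fm set \<Rightarrow> ('f, 'p) fm set \<Rightarrow> ('f, 'p) fm \<Rightarrow> bool"
  for cl :: bool and Ax :: "('f, 'p) fm set" where
  Axiom: "\<phi> \<in> Ax \<Longrightarrow> deriv cl Ax \<Gamma> \<phi>"
| Hyp: "\<phi> \<in> \<Gamma> \<Longrightarrow> deriv cl Ax \<Gamma> \<phi>"
| AndI: "deriv cl Ax \<Gamma> \<phi> \<Longrightarrow> deriv cl Ax \<Gamma> \<psi> \<Longrightarrow> deriv cl Ax \<Gamma> (And \<phi> \<psi>)"
| AndE1: "deriv cl Ax \<Gamma> (And \<phi> \<psi>) \<Longrightarrow> deriv cl Ax \<Gamma> \<phi>"
| AndE2: "deriv cl Ax \<Gamma> (And \<phi> \<psi>) \<Longrightarrow> deriv cl Ax \<Gamma> \<psi>"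
| OrI1: "deriv cl Ax \<Gamma> \<phi> \<Longrightarrow> deriv cl Ax \<Gamma> (Or \<phi> \<psi>)"
| OrI2: "deriv cl Ax \<Gamma> \<psi> \<Longrightarrow> deriv cl Ax \<Gamma> (Or \<phi> \<psi>)"
| OrE: "deriv cl Ax \<Gamma> (Or \<phi> \<psi>) \<Longrightarrow> deriv cl Ax (insert \<phi> \<Gamma>) \<chi> \<Longrightarrow>
        deriv cl Ax (insert \<psi> \<Gamma>) \<chi> \<Longrightarrow> deriv cl Ax \<Gamma> \<chi>"
| ImpI: "deriv cl Ax (insert \<phi> \<Gamma>) \<psi> \<Longrightarrow> deriv cl Ax \<Gamma> (Imp \<phi> \<psi>)"
| ImpE: "deriv cl Ax \<Gamma> (Imp \<phi> \<psi>) \<Longrightarrow> deriv cl Ax \<Gamma> \<phi> \<Longrightarrow> deriv cl Ax \<Gamma> \<psi>"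
| AllI: "deriv cl Ax (liftf 0 ` \<Gamma>) \<phi> \<Longrightarrow> deriv cl Ax \<Gamma> (All \<phi>)"
| AllE: "deriv cl Ax \<Gamma> (All \<phi>) \<Longrightarrow> deriv cl Ax \<Gamma> (substf 0 t \<phi>)"
| ExI: "deriv cl Ax \<Gamma> (substf 0 t \<phi>) \<Longrightarrow> deriv cl Ax \<Gamma> (Ex \<phi>)"
| ExE: "deriv cl Ax \<Gamma> (Ex \<phi>) \<Longrightarrow> deriv cl Ax (insert \<phi> (liftf 0 ` \<Gamma>)) (liftf 0 \<psi>) \<Longrightarrow>
        deriv cl Ax \<Gamma> \<psi>"
| DNE: "cl \<Longrightarrow> deriv cl Ax \<Gamma> (Neg (Neg \<phi>)) \<Longrightarrow> deriv cl Ax \<Gamma> \<phi>"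

abbreviation minimal_provable :: "('f, 'p) fm \<Rightarrow> bool" where
  "minimal_provable \<phi> \<equiv> deriv False {} {} \<phi>"

fun nnf :: "('f, 'p) fm \<Rightarrow> bool" where
  "nnf (Atom p ts) = True"
| "nnf (Imp (Atom p ts) Bot) = True"
| "nnf (And \<phi> \<psi>) = (nnf \<phi> \<and> nnf \<psi>)"
| "nnf (Or \<phi> \<psi>) = (nnf \<phi> \<and> nnf \<psi>)"
| "nnf (All \<phi>) = nnf \<phi>"
| "nnf (Ex \<phi>) = nnf \<phi>"
| "nnf _ = False"

fun cneg :: "('f, 'p) fm \<Rightarrow> ('f, 'p) fm" where
  "cneg (Atom p ts) = Neg (Atom p ts)"
| "cneg (Imp (Atom p ts) Bot) = Atom p ts"
| "cneg (And \<phi> \<psi>) = Or (cneg \<phi>) (cneg \<psi>)"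
| "cneg (Or \<phi> \<psi>) = And (cneg \<phi>) (cneg \<psi>)"
| "cneg (All \<phi>) = Ex (cneg \<phi>)"
| "cneg (Ex \<phi>) = All (cneg \<phi>)"
| "cneg \<phi> = Neg \<phi>"  (* irrelevant: outside negation normal form *)

definition awk :: "('f, 'p) fm \<Rightarrow> ('f, 'p) fm" where
  "awk \<phi> = Neg (cneg \<phi>)"

primrec gg :: "('f, 'p) fm \<Rightarrow> ('f, 'p) fm" where
  "gg Bot = Bot"
| "gg (Atom p ts) = Neg (Neg (Atom p ts))"
| "gg (And \<phi> \<psi>) = And (gg \<phi>) (gg \<psi>)"
| "gg (Or \<phi> \<psi>) = Neg (And (Neg (gg \<phi>)) (Neg (gg \<psi>)))"
| "gg (Imp \<phi> \<psi>) = Imp (gg \<phi>) (gg \<psi>)"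
| "gg (All \<phi>) = All (gg \<phi>)"
| "gg (Ex \<phi>) = Neg (All (Neg (gg \<phi>)))"

text \<open>Codes of primitive recursive functions: Comp m f gs is the m-ary composition
  of f with gs; Rec f g is h with h 0 xs = f xs and h (S x) xs = g (h x xs) x xs.\<close>
datatype prfn = Zero | Succ | Proj nat nat | Comp nat prfn "prfn list" | Rec prfn prfn

primrec arity :: "prfn \<Rightarrow> nat" where
  "arity Zero = 0"
| "arity Succ = 1"
| "arity (Proj n i) = n"
| "arity (Comp m f gs) = m"
| "arity (Rec f g) = Suc (arity f)"

fun wf_prf :: "prfn \<Rightarrow> bool" where
  "wf_prf Zero = True"
| "wf_prf Succ = True"
| "wf_prf (Proj n i) = (i < n)"
| "wf_prf (Comp m f gs) = (wf_prf f \<and> length gs = arity f \<and>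
      (\<forall>g\<in>set gs. wf_prf g \<and> arity g = m))"
| "wf_prf (Rec f g) = (wf_prf f \<and> wf_prf g \<and> arity g = Suc (Suc (arity f)))"

datatype apred = EqP

type_synonym afm = "(prfn, apred) fm"

fun wf_trm :: "prfn trm \<Rightarrow> bool" where
  "wf_trm (Var i) = True"
| "wf_trm (Fn f ts) = (wf_prf f \<and> length ts = arity f \<and> (\<forall>t\<in>set ts. wf_trm t))"

fun wf_afm :: "afm \<Rightarrow> bool" where
  "wf_afm Bot = True"
| "wf_afm (Atom p ts) = (length ts = 2 \<and> (\<forall>t\<in>set ts. wf_trm t))"
| "wf_afm (And \<phi> \<psi>) = (wf_afm \<phi> \<and> wf_afm \<psi>)"
| "wf_afm (Or \<phi> \<psi>) = (wf_afm \<phi> \<and> wf_afm \<psi>)"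
| "wf_afm (Imp \<phi> \<psi>) = (wf_afm \<phi> \<and> wf_afm \<psi>)"
| "wf_afm (All \<phi>) = wf_afm \<phi>"
| "wf_afm (Ex \<phi>) = wf_afm \<phi>"

abbreviation Eq :: "prfn trm \<Rightarrow> prfn trm \<Rightarrow> afm" where
  "Eq t s \<equiv> Atom EqP [t, s]"

abbreviation zero :: "prfn trm" where "zero \<equiv> Fn Zero []"
abbreviation suc :: "prfn trm \<Rightarrow> prfn trm" where "suc t \<equiv> Fn Succ [t]"

inductive_set arith_ax :: "afm set" where
  eq_refl: "wf_trm t \<Longrightarrow> Eq t t \<in> arith_ax"
| eq_subst: "wf_trm t \<Longrightarrow> wf_trm s \<Longrightarrow> wf_afm \<phi> \<Longrightarrow>
     Imp (Eq t s) (Imp (substf 0 t \<phi>) (substf 0 s \<phi>)) \<in> arith_ax"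
| suc_ne_zero: "wf_trm t \<Longrightarrow> Neg (Eq (suc t) zero) \<in> arith_ax"
| suc_inj: "wf_trm t \<Longrightarrow> wf_trm s \<Longrightarrow> Imp (Eq (suc t) (suc s)) (Eq t s) \<in> arith_ax"
| proj_def: "wf_prf (Proj n i) \<Longrightarrow> length ts = n \<Longrightarrow> \<forall>t\<in>set ts. wf_trm t \<Longrightarrow>
     Eq (Fn (Proj n i) ts) (ts ! i) \<in> arith_ax"
| comp_def: "wf_prf (Comp m f gs) \<Longrightarrow> length ts = m \<Longrightarrow> \<forall>t\<in>set ts. wf_trm t \<Longrightarrow>
     Eq (Fn (Comp m f gs) ts) (Fn f (map (\<lambda>g. Fn g ts) gs)) \<in> arith_ax"
| rec_zero: "wf_prf (Rec f g) \<Longrightarrow> length ts = arity f \<Longrightarrow> \<forall>t\<in>set ts. wf_trm t \<Longrightarrow>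
     Eq (Fn (Rec f g) (zero # ts)) (Fn f ts) \<in> arith_ax"
| rec_suc: "wf_prf (Rec f g) \<Longrightarrow> length ts = arity f \<Longrightarrow> \<forall>t\<in>set ts. wf_trm t \<Longrightarrow>
     wf_trm x \<Longrightarrow>
     Eq (Fn (Rec f g) (suc x # ts)) (Fn g (Fn (Rec f g) (x # ts) # x # ts)) \<in> arith_ax"
| induction: "wf_afm \<phi> \<Longrightarrow>
     Imp (And (substf 0 zero \<phi>) (All (Imp \<phi> (substf 0 (suc (Var 0)) (liftf 1 \<phi>)))))
         (All \<phi>) \<in> arith_ax"

definition HA' :: "afm \<Rightarrow> bool" where
  "HA' \<phi> \<longleftrightarrow> deriv False arith_ax {} \<phi>"

definition PA :: "afm \<Rightarrow> bool" where
  "PA \<phi> \<longleftrightarrow> deriv True arith_ax {} \<phi>"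

end

theory Submission
  imports Defs
begin

lemma mono_gen:
  "deriv cl Ax \<Gamma> \<phi> \<Longrightarrow> (cl \<longrightarrow> cl') \<Longrightarrow> Ax \<subseteq> Ax' \<Longrightarrow> \<Gamma> \<subseteq> \<Delta> \<Longrightarrow> deriv cl' Ax' \<Delta> \<phi>"
proof (induction arbitrary: \<Delta> rule: deriv.induct)
  case (AllI \<Gamma> \<phi>) then show ?case by (meson deriv.AllI image_mono)
next
  case (OrE \<Gamma> \<phi> \<psi> \<chi>) then show ?case by (meson deriv.OrE insert_mono)
next
  case (ImpI \<phi> \<Gamma> \<psi>) then show ?case by (meson deriv.ImpI insert_mono)
next
  case (ExE \<Gamma> \<phi> \<psi>) then show ?case by (meson deriv.ExE insert_mono image_mono)
next
  case (ExI \<Gamma> t \<phi>) then show ?case by (meson deriv.ExI)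
qed (auto intro: deriv.intros)

lemma wk: "deriv cl Ax \<Gamma> \<phi> \<Longrightarrow> \<Gamma> \<subseteq> \<Delta> \<Longrightarrow> deriv cl Ax \<Delta> \<phi>"
  using mono_gen by blast

lemma wk0: "deriv cl Ax {} \<phi> \<Longrightarrow> deriv cl Ax \<Delta> \<phi>"
  using wk by blast

lemma subt_lift: "substt k (Var k) (liftt (Suc k) t) = t"
  by (induction t) (auto intro: map_idI)

lemma sub_lift: "substf k (Var k) (liftf (Suc k) \<phi>) = \<phi>"
  by (induction \<phi> arbitrary: k) (auto simp: subt_lift intro: map_idI)

lemma sub_lift0: "substf 0 (Var 0) (liftf (Suc 0) \<phi>) = \<phi>"
  by (rule sub_lift)

lemma gg_lift: "gg (liftf k \<phi>) = liftf k (gg \<phi>)"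
  by (induction \<phi> arbitrary: k) auto

lemma gg_subst: "gg (substf k t \<phi>) = substf k t (gg \<phi>)"
  by (induction \<phi> arbitrary: k t) auto

lemma gg_wf: "wf_afm \<phi> \<Longrightarrow> wf_afm (gg \<phi>)"
  by (induction \<phi>) auto

lemma allE0: "deriv cl Ax \<Gamma> (All (liftf (Suc 0) \<phi>)) \<Longrightarrow> deriv cl Ax \<Gamma> \<phi>"
  using deriv.AllE[of cl Ax \<Gamma> "liftf (Suc 0) \<phi>" "Var 0"] by (simp add: sub_lift0)

lemma exI0: "deriv cl Ax \<Gamma> \<phi> \<Longrightarrow> deriv cl Ax \<Gamma> (Ex (liftf (Suc 0) \<phi>))"
  using deriv.ExI[of cl Ax \<Gamma> "Var 0" "liftf (Suc 0) \<phi>"] by (simp add: sub_lift0)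

lemma dn_intro: "deriv cl Ax \<Gamma> a \<Longrightarrow> deriv cl Ax \<Gamma> (Neg (Neg a))"
  apply (rule deriv.ImpI)
  apply (rule deriv.ImpE[where \<phi>=a])
   apply (rule deriv.Hyp, simp)
  apply (erule wk, blast)
  done

lemma tn: "deriv cl Ax \<Gamma> (Imp (Neg (Neg (Neg a))) (Neg a))"
  apply (rule deriv.ImpI)+
  apply (rule deriv.ImpE[where \<phi>="Neg (Neg a)"])
   apply (rule deriv.Hyp, simp)
  apply (rule dn_intro, rule deriv.Hyp, simp)
  done


lemma nnf_imp: "nnf (Imp a b) \<Longrightarrow> \<exists>p ts. a = Atom p ts \<and> b = Bot"
  by (cases a; cases b) auto

lemma part1: "nnf \<phi> \<Longrightarrow> deriv cl Ax \<Gamma> (Imp (gg \<phi>) (awk \<phi>))"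
proof (induction \<phi> arbitrary: \<Gamma>)
  case Bot then show ?case by simp
next
  case (Atom p ts) then show ?case
    by (simp add: awk_def) (rule deriv.ImpI, rule deriv.Hyp, simp)
next
  case (Imp a b)
  then obtain p ts where "a = Atom p ts" "b = Bot" using nnf_imp by blast
  then show ?case using tn by (simp add: awk_def)
next
  case (And a b)
  then have IHa: "\<And>\<Gamma>. deriv cl Ax \<Gamma> (Imp (gg a) (Neg (cneg a)))"
        and IHb: "\<And>\<Gamma>. deriv cl Ax \<Gamma> (Imp (gg b) (Neg (cneg b)))" by (auto simp: awk_def)
  let ?G = "insert (Or (cneg a) (cneg b)) (insert (And (gg a) (gg b)) \<Gamma>)"
  have A: "deriv cl Ax (insert (cneg a) ?G) Bot"
    apply (rule deriv.ImpE[where \<phi>="cneg a"])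
     apply (rule deriv.ImpE[OF IHa])
     apply (rule deriv.AndE1[where \<psi>="gg b"], rule deriv.Hyp, simp)
    by (rule deriv.Hyp, simp)
  have B: "deriv cl Ax (insert (cneg b) ?G) Bot"
    apply (rule deriv.ImpE[where \<phi>="cneg b"])
     apply (rule deriv.ImpE[OF IHb])
     apply (rule deriv.AndE2[where \<phi>="gg a"], rule deriv.Hyp, simp)
    by (rule deriv.Hyp, simp)
  have "deriv cl Ax ?G Bot"
    by (rule deriv.OrE[OF deriv.Hyp A B]) simp
  then show ?case by (auto simp: awk_def intro!: deriv.ImpI)
next
  case (Or a b)
  then have IHa: "\<And>\<Gamma>. deriv cl Ax \<Gamma> (Imp (gg a) (Neg (cneg a)))"
        and IHb: "\<And>\<Gamma>. deriv cl Ax \<Gamma> (Imp (gg b) (Neg (cneg b)))" by (auto simp: awk_def)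
  let ?G = "insert (And (cneg a) (cneg b)) (insert (Neg (And (Neg (gg a)) (Neg (gg b)))) \<Gamma>)"
  have A: "deriv cl Ax ?G (Neg (gg a))"
    apply (rule deriv.ImpI)
    apply (rule deriv.ImpE[where \<phi>="cneg a"])
     apply (rule deriv.ImpE[OF IHa], rule deriv.Hyp, simp)
    apply (rule deriv.AndE1[where \<psi>="cneg b"], rule deriv.Hyp, simp)
    done
  have B: "deriv cl Ax ?G (Neg (gg b))"
    apply (rule deriv.ImpI)
    apply (rule deriv.ImpE[where \<phi>="cneg b"])
     apply (rule deriv.ImpE[OF IHb], rule deriv.Hyp, simp)
    apply (rule deriv.AndE2[where \<phi>="cneg a"], rule deriv.Hyp, simp)
    done
  have "deriv cl Ax ?G Bot"
    apply (rule deriv.ImpE[where \<phi>="And (Neg (gg a)) (Neg (gg b))"])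
     apply (rule deriv.Hyp, simp)
    by (rule deriv.AndI[OF A B])
  then show ?case by (auto simp: awk_def intro!: deriv.ImpI)
next
  case (All a)
  then have IHa: "\<And>\<Gamma>. deriv cl Ax \<Gamma> (Imp (gg a) (Neg (cneg a)))" by (auto simp: awk_def)
  let ?G = "insert (Ex (cneg a)) (insert (All (gg a)) \<Gamma>)"
  let ?D = "insert (cneg a) (liftf 0 ` ?G)"
  have ga: "deriv cl Ax ?D (gg a)"
    by (rule allE0, rule deriv.Hyp, simp)
  have "deriv cl Ax ?D Bot"
    apply (rule deriv.ImpE[where \<phi>="cneg a"])
     apply (rule deriv.ImpE[OF IHa ga])
    by (rule deriv.Hyp, simp)
  then have "deriv cl Ax ?D (liftf 0 Bot)" by simp
  then have "deriv cl Ax ?G Bot"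
    by (rule deriv.ExE[OF deriv.Hyp, rotated]) simp
  then show ?case by (auto simp: awk_def intro!: deriv.ImpI)
next
  case (Ex a)
  then have IHa: "\<And>\<Gamma>. deriv cl Ax \<Gamma> (Imp (gg a) (Neg (cneg a)))" by (auto simp: awk_def)
  let ?G = "insert (All (cneg a)) (insert (Neg (All (Neg (gg a)))) \<Gamma>)"
  let ?D = "insert (gg a) (liftf 0 ` ?G)"
  have ca: "deriv cl Ax ?D (cneg a)"
    by (rule allE0, rule deriv.Hyp, simp)
  have "deriv cl Ax ?D Bot"
    apply (rule deriv.ImpE[where \<phi>="cneg a"])
     apply (rule deriv.ImpE[OF IHa], rule deriv.Hyp, simp)
    by (rule ca)
  then have "deriv cl Ax ?G (All (Neg (gg a)))"
    by (intro deriv.AllI deriv.ImpI)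
  then have "deriv cl Ax ?G Bot"
    by (rule deriv.ImpE[OF deriv.Hyp, rotated]) simp
  then show ?case by (auto simp: awk_def intro!: deriv.ImpI)
qed


lemma stab: "deriv cl Ax \<Gamma> (Imp (Neg (Neg (gg \<phi>))) (gg \<phi>))"
proof (induction \<phi> arbitrary: \<Gamma>)
  case Bot show ?case
    apply simp
    apply (rule deriv.ImpI)
    apply (rule deriv.ImpE[where \<phi>="Neg Bot"])
     apply (rule deriv.Hyp, simp)
    by (rule deriv.ImpI, rule deriv.Hyp, simp)
next
  case (Atom p ts) show ?case using tn by simp
next
  case (Or a b) show ?case using tn by simp
next
  case (Ex a) show ?case using tn by simp
next
  case (And a b)
  let ?G = "insert (Neg (Neg (And (gg a) (gg b)))) \<Gamma>"
  have A: "deriv cl Ax ?G (Neg (Neg (gg a)))"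
    apply (rule deriv.ImpI)
    apply (rule deriv.ImpE[where \<phi>="Neg (And (gg a) (gg b))"])
     apply (rule deriv.Hyp, simp)
    apply (rule deriv.ImpI)
    apply (rule deriv.ImpE[where \<phi>="gg a"])
     apply (rule deriv.Hyp, simp)
    by (rule deriv.AndE1[where \<psi>="gg b"], rule deriv.Hyp, simp)
  have B: "deriv cl Ax ?G (Neg (Neg (gg b)))"
    apply (rule deriv.ImpI)
    apply (rule deriv.ImpE[where \<phi>="Neg (And (gg a) (gg b))"])
     apply (rule deriv.Hyp, simp)
    apply (rule deriv.ImpI)
    apply (rule deriv.ImpE[where \<phi>="gg b"])
     apply (rule deriv.Hyp, simp)
    by (rule deriv.AndE2[where \<phi>="gg a"], rule deriv.Hyp, simp)
  have "deriv cl Ax ?G (And (gg a) (gg b))"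
    by (rule deriv.AndI[OF deriv.ImpE[OF And(1) A] deriv.ImpE[OF And(2) B]])
  then show ?case by (simp add: deriv.ImpI)
next
  case (Imp a b)
  let ?G = "insert (gg a) (insert (Neg (Neg (Imp (gg a) (gg b)))) \<Gamma>)"
  have B: "deriv cl Ax ?G (Neg (Neg (gg b)))"
    apply (rule deriv.ImpI)
    apply (rule deriv.ImpE[where \<phi>="Neg (Imp (gg a) (gg b))"])
     apply (rule deriv.Hyp, simp)
    apply (rule deriv.ImpI)
    apply (rule deriv.ImpE[where \<phi>="gg b"])
     apply (rule deriv.Hyp, simp)
    apply (rule deriv.ImpE[where \<phi>="gg a"])
    by (rule deriv.Hyp, simp)+
  have "deriv cl Ax ?G (gg b)"
    by (rule deriv.ImpE[OF Imp(2) B])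
  then show ?case by (simp add: deriv.ImpI)
next
  case (All a)
  let ?G = "insert (Neg (Neg (All (gg a)))) \<Gamma>"
  let ?D = "liftf 0 ` ?G"
  have A: "deriv cl Ax ?D (Neg (Neg (gg a)))"
    apply (rule deriv.ImpI)
    apply (rule deriv.ImpE[where \<phi>="Neg (All (liftf (Suc 0) (gg a)))"])
     apply (rule deriv.Hyp, simp)
    apply (rule deriv.ImpI)
    apply (rule deriv.ImpE[where \<phi>="gg a"])
     apply (rule deriv.Hyp, simp)
    by (rule allE0, rule deriv.Hyp, simp)
  have "deriv cl Ax ?G (All (gg a))"
    by (rule deriv.AllI, rule deriv.ImpE[OF All A])
  then show ?case by (simp add: deriv.ImpI)
qed

lemma stabE: "deriv cl Ax \<Gamma> (Neg (Neg (gg \<phi>))) \<Longrightarrow> deriv cl Ax \<Gamma> (gg \<phi>)"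
  by (rule deriv.ImpE[OF stab])

lemma ax_gg: "\<phi> \<in> arith_ax \<Longrightarrow> deriv False arith_ax \<Delta> (gg \<phi>)"
proof (induction rule: arith_ax.induct)
  case (eq_refl t) then show ?case using dn_intro deriv.Axiom arith_ax.intros gg.simps(2) by metis
next
  case (eq_subst t s \<phi>)
  have ax: "Imp (Eq t s) (Imp (substf 0 t (gg \<phi>)) (substf 0 s (gg \<phi>))) \<in> arith_ax"
    using eq_subst by (auto intro!: arith_ax.intros gg_wf)
  let ?G = "insert (substf 0 t (gg \<phi>)) (insert (Neg (Neg (Eq t s))) \<Delta>)"
  have "deriv False arith_ax ?G (Neg (Neg (gg (substf 0 s \<phi>))))"
    apply (simp only: gg_subst)
    apply (rule deriv.ImpI)
    apply (rule deriv.ImpE[where \<phi>="Neg (Eq t s)"])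
     apply (rule deriv.Hyp, simp)
    apply (rule deriv.ImpI)
    apply (rule deriv.ImpE[where \<phi>="substf 0 s (gg \<phi>)"])
     apply (rule deriv.Hyp, simp)
    apply (rule deriv.ImpE[where \<phi>="substf 0 t (gg \<phi>)"])
     apply (rule deriv.ImpE[OF deriv.Axiom[OF ax]])
     apply (rule deriv.Hyp, simp)
    by (rule deriv.Hyp, simp)
  then have "deriv False arith_ax ?G (gg (substf 0 s \<phi>))" by (rule stabE)
  then show ?case by (simp add: gg_subst deriv.ImpI)
next
  case (suc_ne_zero t)
  have ax: "Neg (Eq (suc t) zero) \<in> arith_ax" using suc_ne_zero by (rule arith_ax.intros)
  show ?case
    apply simp
    apply (rule deriv.ImpI)
    apply (rule deriv.ImpE[where \<phi>="Neg (Eq (suc t) zero)"])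
     apply (rule deriv.Hyp, simp)
    by (rule deriv.Axiom[OF ax])
next
  case (suc_inj t s)
  have ax: "Imp (Eq (suc t) (suc s)) (Eq t s) \<in> arith_ax" using suc_inj by (rule arith_ax.intros)
  show ?case
    apply simp
    apply (rule deriv.ImpI)+
    apply (rule deriv.ImpE[where \<phi>="Neg (Eq (suc t) (suc s))"])
     apply (rule deriv.Hyp, simp)
    apply (rule deriv.ImpI)
    apply (rule deriv.ImpE[where \<phi>="Eq t s"])
     apply (rule deriv.Hyp, simp)
    apply (rule deriv.ImpE[OF deriv.Axiom[OF ax]])
    by (rule deriv.Hyp, simp)
next
  case (proj_def n i ts) then show ?case using dn_intro deriv.Axiom arith_ax.intros gg.simps(2) by metis
next
  case (comp_def m f gs ts) then show ?case using dn_intro deriv.Axiom arith_ax.intros gg.simps(2) by metis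
next
  case (rec_zero f g ts) then show ?case using dn_intro deriv.Axiom arith_ax.intros gg.simps(2) by metis
next
  case (rec_suc f g ts x) then show ?case using dn_intro deriv.Axiom arith_ax.intros gg.simps(2) by metis
next
  case (induction \<phi>)
  have "Imp (And (substf 0 zero (gg \<phi>)) (All (Imp (gg \<phi>) (substf 0 (suc (Var 0)) (liftf 1 (gg \<phi>))))))
         (All (gg \<phi>)) \<in> arith_ax"
    using induction by (intro arith_ax.induction gg_wf)
  then show ?case by (simp add: gg_subst gg_lift deriv.Axiom)
qed

lemma gg_img_lift: "gg ` liftf 0 ` \<Gamma> = liftf 0 ` gg ` \<Gamma>"
  by (simp add: image_image gg_lift)

lemma gg_sound: "deriv True arith_ax \<Gamma> \<phi> \<Longrightarrow> deriv False arith_ax (gg ` \<Gamma>) (gg \<phi>)"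
proof (induction rule: deriv.induct)
  case (Axiom \<phi> \<Gamma>) then show ?case by (rule ax_gg)
next
  case (Hyp \<phi> \<Gamma>) then show ?case by (simp add: deriv.Hyp)
next
  case (AndI \<Gamma> \<phi> \<psi>) then show ?case by (simp add: deriv.AndI)
next
  case (AndE1 \<Gamma> \<phi> \<psi>) then show ?case using deriv.AndE1 by fastforce
next
  case (AndE2 \<Gamma> \<phi> \<psi>) then show ?case using deriv.AndE2 by fastforce
next
  case (OrI1 \<Gamma> \<phi> \<psi>)
  show ?case
    apply simp
    apply (rule deriv.ImpI)
    apply (rule deriv.ImpE[where \<phi>="gg \<phi>"])
     apply (rule deriv.AndE1[where \<psi>="Neg (gg \<psi>)"], rule deriv.Hyp, simp)
    by (rule wk[OF OrI1.IH], blast)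
next
  case (OrI2 \<Gamma> \<psi> \<phi>)
  show ?case
    apply simp
    apply (rule deriv.ImpI)
    apply (rule deriv.ImpE[where \<phi>="gg \<psi>"])
     apply (rule deriv.AndE2[where \<phi>="Neg (gg \<phi>)"], rule deriv.Hyp, simp)
    by (rule wk[OF OrI2.IH], blast)
next
  case (OrE \<Gamma> \<phi> \<psi> \<chi>)
  let ?G = "insert (Neg (gg \<chi>)) (gg ` \<Gamma>)"
  have D1: "deriv False arith_ax (insert (gg \<phi>) (gg ` \<Gamma>)) (gg \<chi>)" using OrE.IH(2) by simp
  have D2: "deriv False arith_ax (insert (gg \<psi>) (gg ` \<Gamma>)) (gg \<chi>)" using OrE.IH(3) by simp
  have "deriv False arith_ax ?G Bot"
    apply (rule deriv.ImpE[where \<phi>="And (Neg (gg \<phi>)) (Neg (gg \<psi>))"])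
     apply (rule wk[OF OrE.IH(1)[simplified]], blast)
    apply (rule deriv.AndI)
     apply (rule deriv.ImpI)
     apply (rule deriv.ImpE[where \<phi>="gg \<chi>"])
      apply (rule deriv.Hyp, simp)
     apply (rule wk[OF D1], blast)
    apply (rule deriv.ImpI)
    apply (rule deriv.ImpE[where \<phi>="gg \<chi>"])
     apply (rule deriv.Hyp, simp)
    by (rule wk[OF D2], blast)
  then show ?case by (intro stabE deriv.ImpI)
next
  case (ImpI \<phi> \<Gamma> \<psi>) then show ?case by (simp add: deriv.ImpI)
next
  case (ImpE \<Gamma> \<phi> \<psi>) then show ?case using deriv.ImpE by fastforce
next
  case (AllI \<Gamma> \<phi>) then show ?case by (simp add: gg_img_lift deriv.AllI)
next
  case (AllE \<Gamma> \<phi> t) then show ?case using deriv.AllE by (fastforce simp: gg_subst)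
next
  case (ExI \<Gamma> t \<phi>)
  show ?case
    apply simp
    apply (rule deriv.ImpI)
    apply (rule deriv.ImpE[where \<phi>="substf 0 t (gg \<phi>)"])
     apply (rule deriv.AllE[where \<phi>="Neg (gg \<phi>)", simplified])
     apply (rule deriv.Hyp, simp)
    by (rule wk[OF ExI.IH[simplified gg_subst]], blast)
next
  case (ExE \<Gamma> \<phi> \<psi>)
  let ?G = "insert (Neg (gg \<psi>)) (gg ` \<Gamma>)"
  have D2: "deriv False arith_ax (insert (gg \<phi>) (liftf 0 ` gg ` \<Gamma>)) (liftf 0 (gg \<psi>))"
    using ExE.IH(2) by (simp add: gg_img_lift gg_lift)
  have "deriv False arith_ax ?G (All (Neg (gg \<phi>)))"
    apply (rule deriv.AllI)
    apply (rule deriv.ImpI)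
    apply (rule deriv.ImpE[where \<phi>="liftf 0 (gg \<psi>)"])
     apply (rule deriv.Hyp, simp)
    by (rule wk[OF D2], blast)
  then have "deriv False arith_ax ?G Bot"
    by (rule deriv.ImpE[OF wk[OF ExE.IH(1)[simplified]], rotated]) blast
  then show ?case by (intro stabE deriv.ImpI)
next
  case (DNE \<Gamma> \<phi>) then show ?case by (simp add: stabE)
qed


lemma clneg: "nnf \<phi> \<Longrightarrow> deriv True Ax \<Gamma> (Imp (Neg \<phi>) (cneg \<phi>))"
proof (induction \<phi> arbitrary: \<Gamma>)
  case Bot then show ?case by simp
next
  case (Atom p ts) show ?case by simp (rule deriv.ImpI, rule deriv.Hyp, simp)
next
  case (Imp a b)
  then obtain p ts where "a = Atom p ts" "b = Bot" using nnf_imp by blast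
  then show ?case by simp (rule deriv.ImpI, rule deriv.DNE, simp, rule deriv.Hyp, simp)
next
  case (And a b)
  then have IHa: "\<And>\<Gamma>. deriv True Ax \<Gamma> (Imp (Neg a) (cneg a))"
        and IHb: "\<And>\<Gamma>. deriv True Ax \<Gamma> (Imp (Neg b) (cneg b))" by auto
  let ?G = "insert (Neg (Or (cneg a) (cneg b))) (insert (Neg (And a b)) \<Gamma>)"
  have A: "deriv True Ax ?G a"
    apply (rule deriv.DNE, simp)
    apply (rule deriv.ImpI)
    apply (rule deriv.ImpE[where \<phi>="Or (cneg a) (cneg b)"])
     apply (rule deriv.Hyp, simp)
    apply (rule deriv.OrI1)
    apply (rule deriv.ImpE[OF IHa])
    by (rule deriv.Hyp, simp)
  have B: "deriv True Ax ?G b"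
    apply (rule deriv.DNE, simp)
    apply (rule deriv.ImpI)
    apply (rule deriv.ImpE[where \<phi>="Or (cneg a) (cneg b)"])
     apply (rule deriv.Hyp, simp)
    apply (rule deriv.OrI2)
    apply (rule deriv.ImpE[OF IHb])
    by (rule deriv.Hyp, simp)
  have "deriv True Ax ?G Bot"
    apply (rule deriv.ImpE[where \<phi>="And a b"])
     apply (rule deriv.Hyp, simp)
    by (rule deriv.AndI[OF A B])
  then show ?case by simp (rule deriv.ImpI, rule deriv.DNE, simp, rule deriv.ImpI)
next
  case (Or a b)
  then have IHa: "\<And>\<Gamma>. deriv True Ax \<Gamma> (Imp (Neg a) (cneg a))"
        and IHb: "\<And>\<Gamma>. deriv True Ax \<Gamma> (Imp (Neg b) (cneg b))" by auto
  let ?G = "insert (Neg (Or a b)) \<Gamma>"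
  have A: "deriv True Ax ?G (cneg a)"
    apply (rule deriv.ImpE[OF IHa])
    apply (rule deriv.ImpI)
    apply (rule deriv.ImpE[where \<phi>="Or a b"])
     apply (rule deriv.Hyp, simp)
    by (rule deriv.OrI1, rule deriv.Hyp, simp)
  have B: "deriv True Ax ?G (cneg b)"
    apply (rule deriv.ImpE[OF IHb])
    apply (rule deriv.ImpI)
    apply (rule deriv.ImpE[where \<phi>="Or a b"])
     apply (rule deriv.Hyp, simp)
    by (rule deriv.OrI2, rule deriv.Hyp, simp)
  show ?case by simp (rule deriv.ImpI, rule deriv.AndI[OF A B])
next
  case (All a)
  then have IHa: "\<And>\<Gamma>. deriv True Ax \<Gamma> (Imp (Neg a) (cneg a))" by auto
  let ?G = "insert (Neg (Ex (cneg a))) (insert (Neg (All a)) \<Gamma>)"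
  let ?D = "liftf 0 ` ?G"
  have "deriv True Ax ?D a"
    apply (rule deriv.DNE, simp)
    apply (rule deriv.ImpI)
    apply (rule deriv.ImpE[where \<phi>="Ex (liftf (Suc 0) (cneg a))"])
     apply (rule deriv.Hyp, simp)
    apply (rule exI0)
    apply (rule deriv.ImpE[OF IHa])
    by (rule deriv.Hyp, simp)
  then have "deriv True Ax ?G Bot"
    by (rule deriv.ImpE[OF deriv.Hyp deriv.AllI, rotated]) simp
  then show ?case by simp (rule deriv.ImpI, rule deriv.DNE, simp, rule deriv.ImpI)
next
  case (Ex a)
  then have IHa: "\<And>\<Gamma>. deriv True Ax \<Gamma> (Imp (Neg a) (cneg a))" by auto
  let ?G = "insert (Neg (Ex a)) \<Gamma>"
  let ?D = "liftf 0 ` ?G"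
  have "deriv True Ax ?D (cneg a)"
    apply (rule deriv.ImpE[OF IHa])
    apply (rule deriv.ImpI)
    apply (rule deriv.ImpE[where \<phi>="Ex (liftf (Suc 0) a)"])
     apply (rule deriv.Hyp, simp)
    by (rule exI0, rule deriv.Hyp, simp)
  then show ?case by (simp del: liftf.simps image_insert) (rule deriv.ImpI, rule deriv.AllI)
qed

theorem theorem4:
  shows "(\<forall>\<phi> :: ('f, 'p) fm. nnf \<phi> \<longrightarrow> minimal_provable (Imp (gg \<phi>) (awk \<phi>)))
       \<and> (\<forall>\<phi> :: afm. nnf \<phi> \<and> wf_afm \<phi> \<longrightarrow> (PA \<phi> \<longleftrightarrow> HA' (awk \<phi>)))"
proof (intro conjI allI impI)
  fix \<phi> :: "('f, 'p) fm"
  assume "nnf \<phi>" then show "minimal_provable (Imp (gg \<phi>) (awk \<phi>))" by (rule part1)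
next
  fix \<phi> :: afm
  assume h: "nnf \<phi> \<and> wf_afm \<phi>"
  show "PA \<phi> \<longleftrightarrow> HA' (awk \<phi>)"
  proof
    assume "PA \<phi>"
    then have "deriv False arith_ax {} (gg \<phi>)"
      using gg_sound unfolding PA_def by fastforce
    then show "HA' (awk \<phi>)"
      unfolding HA'_def using deriv.ImpE[OF part1] h by blast
  next
    assume "HA' (awk \<phi>)"
    then have a: "deriv True arith_ax {} (awk \<phi>)"
      unfolding HA'_def using mono_gen by blast
    have "deriv True arith_ax {} (Neg (Neg \<phi>))"
      apply (rule deriv.ImpI)
      apply (rule deriv.ImpE[where \<phi>="cneg \<phi>"])
       apply (rule wk[OF a[unfolded awk_def]], simp)
      apply (rule deriv.ImpE[OF clneg])
      using h apply simp
      by (rule deriv.Hyp, simp)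
    then show "PA \<phi>" unfolding PA_def by (rule deriv.DNE[rotated]) simp
  qed
qed

end
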